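(* Let $d$ be a homogeneous distance on $\mathbb H$ with closed unit ball $B$ centered at $0$, and let $S^+=\partial B\cap\{p: z_p>0\}$. Assume there exist sequences $p_n^-=(x_n^-,0,z_n^-)\in S^+$, $p_n^+=(x_n^+,0,z_n^+)\in S^+$ and constants $a>0$, $\bar x>0$ such that for all $n$: $x_n^-<0<x_n^+$; $z_n^->z_n^+>0$; $z_n^+-z_n^-<-a(x_n^+-x_n^-)$; $\{p\in\mathbb H: x_n^+\le x_p\le\bar x,\ y_p=0,\ z_p>z_n^+\}\subset\mathbb H\setminus B$; and $x_n^+-x_n^-\to0$ as $n\to\infty$. Then BCP does not hold in $(\mathbb H,d)$.
   Context: $\mathbb H=\mathbb R^3$, points $p=(x_p,y_p,z_p)$, group law $(x,y,z)\cdot(x',y',z')=(x+x',y+y',z+z'+\tfrac12(xy'-yx'))$, dilations $\delta_\lambda(x,y,z)=(\lambda x,\lambda y,\lambda^2z)$. A distance is homogeneous if it induces the Euclidean topology, is left invariant and satisfies $d(\delta_\lambda p,\delta_\lambda q)=\lambda d(p,q)$. BCP holds for $d$ if there is $N\geq1$ such that for every bounded $A$ and every family $\mathcal B$ of closed balls with each point of $A$ the center of some ball of $\mathcal B$, some subfamily $\mathcal F\subset\mathcal B$ satisfies $\chi_A\le\sum_{B\in\mathcal F}\chi_B\le N$. *)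

theory Defs
  imports "HOL-Analysis.Analysis"
begin

text \<open>The Heisenberg group H = R^3, points (x,y,z), with its Euclidean (product) topology.\<close>
type_synonym heis = "real \<times> real \<times> real"

definition hmult :: "heis \<Rightarrow> heis \<Rightarrow> heis" where
  "hmult p q = (case p of (x, y, z) \<Rightarrow> case q of (x', y', z') \<Rightarrow>
     (x + x', y + y', z + z' + (x * y' - y * x') / 2))"

definition dil :: "real \<Rightarrow> heis \<Rightarrow> heis" where
  "dil l p = (case p of (x, y, z) \<Rightarrow> (l * x, l * y, l^2 * z))"

definition is_distance :: "(heis \<Rightarrow> heis \<Rightarrow> real) \<Rightarrow> bool" where
  "is_distance d \<longleftrightarrow> (\<forall>p q. 0 \<le> d p q) \<and> (\<forall>p q. d p q = 0 \<longleftrightarrow> p = q)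
     \<and> (\<forall>p q. d p q = d q p) \<and> (\<forall>p q r. d p r \<le> d p q + d q r)"

definition induces_euclidean_topology :: "(heis \<Rightarrow> heis \<Rightarrow> real) \<Rightarrow> bool" where
  "induces_euclidean_topology d \<longleftrightarrow>
     (\<forall>U::heis set. open U \<longleftrightarrow> (\<forall>p\<in>U. \<exists>r>0. {q. d p q < r} \<subseteq> U))"

definition homogeneous_distance :: "(heis \<Rightarrow> heis \<Rightarrow> real) \<Rightarrow> bool" where
  "homogeneous_distance d \<longleftrightarrow> is_distance d \<and> induces_euclidean_topology d
     \<and> (\<forall>g p q. d (hmult g p) (hmult g q) = d p q)
     \<and> (\<forall>l>0. \<forall>p q. d (dil l p) (dil l q) = l * d p q)"

definition cball_d :: "(heis \<Rightarrow> heis \<Rightarrow> real) \<Rightarrow> heis \<Rightarrow> real \<Rightarrow> heis set" where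
  "cball_d d p r = {q. d p q \<le> r}"

definition bounded_d :: "(heis \<Rightarrow> heis \<Rightarrow> real) \<Rightarrow> heis set \<Rightarrow> bool" where
  "bounded_d d A \<longleftrightarrow> (\<exists>p r. A \<subseteq> cball_d d p r)"

text \<open>Families of closed balls (radius > 0) are sets of sets.
  The condition chi_A \<le> sum chi_B \<le> N is: A is covered by F and every point lies in at most N
  members of F.\<close>
definition BCP :: "(heis \<Rightarrow> heis \<Rightarrow> real) \<Rightarrow> bool" where
  "BCP d \<longleftrightarrow> (\<exists>N::nat. N \<ge> 1 \<and>
     (\<forall>A \<B>. bounded_d d A
        \<and> (\<forall>b\<in>\<B>. \<exists>c r. r > 0 \<and> b = cball_d d c r)
        \<and> (\<forall>a\<in>A. \<exists>r>0. cball_d d a r \<in> \<B>)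
        \<longrightarrow> (\<exists>\<F>\<subseteq>\<B>. A \<subseteq> \<Union>\<F> \<and>
               (\<forall>p. finite {b\<in>\<F>. p \<in> b} \<and> card {b\<in>\<F>. p \<in> b} \<le> N))))"

end

theory Submission
  imports Defs
begin

theorem theorem6p2:
  fixes d :: "heis \<Rightarrow> heis \<Rightarrow> real"
    and xm zm xp zp :: "nat \<Rightarrow> real" and a xbar :: real
  defines "B \<equiv> cball_d d (0, 0, 0) 1"
  defines "Splus \<equiv> frontier B \<inter> {p. snd (snd p) > 0}"
  assumes hd: "homogeneous_distance d"
    and "\<And>n. (xm n, 0, zm n) \<in> Splus"
    and "\<And>n. (xp n, 0, zp n) \<in> Splus"
    and "a > 0" and "xbar > 0"
    and "\<And>n. xm n < 0 \<and> 0 < xp n"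
    and "\<And>n. zm n > zp n \<and> zp n > 0"
    and "\<And>n. zp n - zm n < - a * (xp n - xm n)"
    and "\<And>n. {p. xp n \<le> fst p \<and> fst p \<le> xbar \<and> fst (snd p) = 0 \<and> snd (snd p) > zp n}
              \<subseteq> UNIV - B"
    and "(\<lambda>n. xp n - xm n) \<longlonglongrightarrow> 0"
  shows "\<not> BCP d"
proof
  assume bcp: "BCP d"
  note A = assms
  have dist: "is_distance d" and top: "induces_euclidean_topology d"
    and inv: "\<And>g p q. d (hmult g p) (hmult g q) = d p q"
    and hom: "\<And>l p q. l > 0 \<Longrightarrow> d (dil l p) (dil l q) = l * d p q"
    using hd unfolding homogeneous_distance_def by auto
  have sym: "\<And>p q. d p q = d q p" and tri: "\<And>p q r. d p r \<le> d p q + d q r"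
    and d0: "\<And>p. d p p = 0"
    using dist unfolding is_distance_def by auto
  have closedB: "closed B"
  proof -
    have "open (- B)"
    proof -
      have "\<forall>p\<in>- B. \<exists>r>0. {q. d p q < r} \<subseteq> - B"
      proof
        fix p assume "p \<in> - B"
        then have p1: "d (0,0,0) p > 1" by (auto simp: B_def cball_d_def)
        show "\<exists>r>0. {q. d p q < r} \<subseteq> - B"
        proof (intro exI[of _ "d (0,0,0) p - 1"] conjI subsetI)
          show "d (0,0,0) p - 1 > 0" using p1 by simp
          fix q assume "q \<in> {q. d p q < d (0,0,0) p - 1}"
          then have "d p q < d (0,0,0) p - 1" by simp
          moreover have "d (0,0,0) p \<le> d (0,0,0) q + d q p" by (rule tri)
          ultimately show "q \<in> - B" using sym[of p q] by (auto simp: B_def cball_d_def)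
        qed
      qed
      then show ?thesis using top unfolding induces_euclidean_topology_def by blast
    qed
    then show ?thesis by (simp add: closed_def)
  qed
  have uB: "d (0,0,0) (xm n, 0, zm n) \<le> 1" for n
  proof -
    have "(xm n, 0, zm n) \<in> frontier B" using A(4) by (simp add: Splus_def)
    then have "(xm n, 0, zm n) \<in> B" using closedB by (simp add: frontier_def)
    then show ?thesis by (simp add: B_def cball_d_def)
  qed
  have out: "d (0,0,0) v > 1" if "xp n \<le> fst v" "fst v \<le> xbar" "fst (snd v) = 0" "snd (snd v) > zp n" for n v
  proof -
    have "v \<in> UNIV - B" using A(11) that by blast
    then show ?thesis by (auto simp: B_def cball_d_def)
  qed
  define w where "w n = xp n - xm n" for n
  have a8: "xm n < 0 \<and> 0 < xp n" for n by (rule A(8))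
  have a10: "zp n - zm n < - a * (xp n - xm n)" for n by (rule A(10))
  have wpos: "w n > 0" for n using a8[of n] by (simp add: w_def)
  have wz: "a * w n < zm n - zp n" for n using a10[of n] by (simp add: w_def algebra_simps)
  have xneg: "xm n < 0" for n using a8[of n] by simp
  define good where "good t1 m1 t2 m2 \<longleftrightarrow> t1 < t2 \<and> w m2 \<le> t1/t2 * (- xm m1)
      \<and> t1/t2 * (- xm m1) \<le> xbar \<and> (t1/t2)^2 * zm m1 < a * w m2" for t1 m1 t2 m2
  define c where "c t m = dil t (xm m, 0, zm m)" for t m
  have geo: "d (c t1 m1) (c t2 m2) > t2" if "0 < t1" "good t1 m1 t2 m2" for t1 t2 m1 m2
  proof -
    have t2: "t2 > 0" using that unfolding good_def by auto
    define s where "s = t1/t2"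
    define v where "v = (xm m2 - s * xm m1, 0::real, zm m2 - s^2 * zm m1)"
    let ?g = "(- (t1 * xm m1), 0::real, - (t1^2 * zm m1))"
    have e1: "hmult ?g (c t1 m1) = (0,0,0)" by (simp add: hmult_def dil_def c_def)
    have t1e: "t1 = s * t2" using t2 by (simp add: s_def)
    have e2: "hmult ?g (c t2 m2) = dil t2 v"
      by (simp add: hmult_def dil_def c_def v_def t1e algebra_simps power2_eq_square)
    have e0: "dil t2 (0,0,0) = (0,0,0)" by (simp add: dil_def)
    have "d (c t1 m1) (c t2 m2) = d (dil t2 (0,0,0)) (dil t2 v)"
      using inv[of ?g "c t1 m1" "c t2 m2"] e1 e2 e0 by simp
    also have "\<dots> = t2 * d (0,0,0) v" using hom t2 by simp
    finally have eq: "d (c t1 m1) (c t2 m2) = t2 * d (0,0,0) v" .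
    have g: "w m2 \<le> s * (- xm m1)" "s * (- xm m1) \<le> xbar" "s^2 * zm m1 < a * w m2"
      using that(2) unfolding good_def s_def by auto
    have "d (0,0,0) v > 1"
    proof (rule out[of m2])
      show "xp m2 \<le> fst v" using g(1) by (simp add: v_def w_def)
      show "fst v \<le> xbar" using g(2) xneg[of m2] by (simp add: v_def)
      show "fst (snd v) = 0" by (simp add: v_def)
      show "snd (snd v) > zp m2" using g(3) wz[of m2] by (simp add: v_def)
    qed
    then show ?thesis using eq t2 by simp
  qed
  have ext: "\<exists>t' m'. t' > 0 \<and> (\<forall>p\<in>S. good (fst p) (snd p) t' m')"
    if fin: "finite S" and pos: "\<forall>p\<in>S. fst p > 0" for S :: "(real \<times> nat) set"
  proof (cases "S = {}")
    case True then show ?thesis by (intro exI[of _ 1]) auto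
  next
    case False
    define \<mu> where "\<mu> = Min ((\<lambda>p. fst p * (- xm (snd p))) ` S)"
    have mupos: "\<mu> > 0" unfolding \<mu>_def using fin False pos xneg
      by (subst Min_gr_iff) (auto simp: mult_less_0_iff)
    have mule: "\<mu> \<le> fst p * (- xm (snd p))" if "p \<in> S" for p
      unfolding \<mu>_def using fin that by (intro Min_le) auto
    have wt: "(\<lambda>n. K * w n) \<longlonglongrightarrow> 0" for K
      using tendsto_mult_right_zero[OF A(12), of K] by (simp add: w_def)
    have ev1: "eventually (\<lambda>n. K * w n < L) sequentially" if "L > 0" for K L
      using order_tendstoD(2)[OF wt[of K] that] .
    have "eventually (\<lambda>n. \<forall>p\<in>S. fst p * w n < \<mu> \<and> (fst p * (- xm (snd p))) * w n < xbar * \<mu>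
        \<and> (fst p ^ 2 * zm (snd p)) * w n < a * \<mu>^2) sequentially"
      using fin
      by (intro eventually_ball_finite ballI eventually_conj ev1)
         (use mupos A(6) A(7) in auto)
    then obtain n where hn: "\<forall>p\<in>S. fst p * w n < \<mu> \<and> (fst p * (- xm (snd p))) * w n < xbar * \<mu>
        \<and> (fst p ^ 2 * zm (snd p)) * w n < a * \<mu>^2"
      unfolding eventually_sequentially by blast
    define T where "T = \<mu> / w n"
    have wn: "w n > 0" by (rule wpos)
    have Tpos: "T > 0" using mupos wn by (simp add: T_def)
    show ?thesis
    proof (intro exI[of _ T] exI[of _ n] conjI ballI Tpos)
      fix p assume pS: "p \<in> S"
      obtain t m where p: "p = (t, m)" by (cases p)
      have tp: "t > 0" using pos pS p by auto
      have h: "t * w n < \<mu>" "t * (- xm m) * w n < xbar * \<mu>" "t^2 * zm m * w n < a * \<mu>^2"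
        using hn pS p by auto
      have ml: "\<mu> \<le> t * (- xm m)" using mule[OF pS] p by simp
      have q: "t / T = t * w n / \<mu>" using wn mupos by (simp add: T_def)
      have c1: "t < T" using h(1) wn by (simp add: T_def field_simps)
      have c2: "w n \<le> t / T * (- xm m)"
      proof -
        have "w n * \<mu> \<le> w n * (t * (- xm m))" using mult_left_mono[OF ml, of "w n"] wn by simp
        then show ?thesis using mupos by (simp add: q field_simps)
      qed
      have c3: "t / T * (- xm m) \<le> xbar"
        using h(2) mupos by (simp add: q field_simps)
      have c4: "(t / T)^2 * zm m < a * w n"
      proof -
        have "(t / T)^2 * zm m = w n * (t^2 * zm m * w n) / \<mu>^2"
          by (simp add: q power2_eq_square field_simps)
        also have "\<dots> < w n * (a * \<mu>^2) / \<mu>^2"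
          using h(3) wn mupos by (intro divide_strict_right_mono mult_strict_left_mono) auto
        also have "\<dots> = a * w n" using mupos by simp
        finally show ?thesis .
      qed
      show "good (fst p) (snd p) T n" using c1 c2 c3 c4 p by (simp add: good_def)
    qed
  qed
  have build: "\<exists>t m. (\<forall>i<k. t i > 0) \<and> (\<forall>i j. i < j \<longrightarrow> j < k \<longrightarrow> good (t i) (m i) (t j) (m j))" for k :: nat
  proof (induction k)
    case 0 then show ?case by auto
  next
    case (Suc k)
    then obtain t m where tm: "\<forall>i<k. t i > 0" "\<forall>i j. i < j \<longrightarrow> j < k \<longrightarrow> good (t i) (m i) (t j) (m j)"
      by blast
    obtain t' m' where t': "t' > 0" "\<forall>p\<in>(\<lambda>i. (t i, m i)) ` {..<k}. good (fst p) (snd p) t' m'"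
      using ext[of "(\<lambda>i. (t i, m i)) ` {..<k}"] tm(1) by auto
    show ?case
    proof (intro exI[of _ "t(k := t')"] exI[of _ "m(k := m')"] conjI allI impI)
      fix i assume "i < Suc k" then show "(t(k := t')) i > 0" using tm(1) t'(1) by auto
    next
      fix i j assume ij: "i < j" "j < Suc k"
      show "good ((t(k := t')) i) ((m(k := m')) i) ((t(k := t')) j) ((m(k := m')) j)"
      proof (cases "j = k")
        case True then show ?thesis using t'(2) ij by auto
      next
        case False then show ?thesis using tm(2) ij by auto
      qed
    qed
  qed
  obtain N :: nat where NB: "\<forall>A \<B>. bounded_d d A
        \<and> (\<forall>b\<in>\<B>. \<exists>c r. r > 0 \<and> b = cball_d d c r)
        \<and> (\<forall>a\<in>A. \<exists>r>0. cball_d d a r \<in> \<B>)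
        \<longrightarrow> (\<exists>\<F>\<subseteq>\<B>. A \<subseteq> \<Union>\<F> \<and>
               (\<forall>p. finite {b\<in>\<F>. p \<in> b} \<and> card {b\<in>\<F>. p \<in> b} \<le> N))"
    using bcp unfolding BCP_def by blast
  define k where "k = Suc N"
  obtain t m where tm: "\<forall>i<k. t i > 0" "\<forall>i j. i < j \<longrightarrow> j < k \<longrightarrow> good (t i) (m i) (t j) (m j)"
    using build by blast
  define cc where "cc i = c (t i) (m i)" for i
  define ball where "ball i = cball_d d (cc i) (t i)" for i
  have sep: "cc i \<notin> ball j" if "i < k" "j < k" "i \<noteq> j" for i j
  proof (cases "i < j")
    case True
    have "d (cc i) (cc j) > t j" unfolding cc_def using geo tm that True by auto
    then show ?thesis using sym by (auto simp: ball_def cball_d_def)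
  next
    case False
    then have ji: "j < i" using that by simp
    have "d (cc j) (cc i) > t i" unfolding cc_def using geo tm that ji by auto
    moreover have "t j < t i" using tm(2) ji that unfolding good_def by auto
    ultimately show ?thesis by (auto simp: ball_def cball_d_def)
  qed
  have self: "cc i \<in> ball i" if "i < k" for i using d0 tm that by (auto simp: ball_def cball_d_def less_imp_le)
  have in0: "d (cc i) (0,0,0) \<le> t i" if "i < k" for i
  proof -
    have ti: "t i > 0" using tm that by auto
    have "d (cc i) (0,0,0) = d (dil (t i) (xm (m i), 0, zm (m i))) (dil (t i) (0,0,0))"
      by (simp add: cc_def c_def dil_def)
    also have "\<dots> = t i * d (xm (m i), 0, zm (m i)) (0,0,0)" using hom ti by simp
    also have "\<dots> \<le> t i * 1" using uB[of "m i"] sym ti by (intro mult_left_mono) auto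
    finally show ?thesis by simp
  qed
  have zin: "(0,0,0) \<in> ball i" if "i < k" for i using in0[OF that] by (simp add: ball_def cball_d_def)
  define R where "R = Max (t ` {..<k})"
  have bnd: "bounded_d d (cc ` {..<k})"
    unfolding bounded_d_def
  proof (intro exI[of _ "(0,0,0)"] exI[of _ R] subsetI)
    fix x assume "x \<in> cc ` {..<k}"
    then obtain i where i: "i < k" "x = cc i" by auto
    have "t i \<le> R" unfolding R_def using i by (intro Max_ge) auto
    then show "x \<in> cball_d d (0,0,0) R" using in0[OF i(1)] sym i by (auto simp: cball_d_def)
  qed
  have balls: "\<forall>b\<in>ball ` {..<k}. \<exists>c r. r > 0 \<and> b = cball_d d c r"
  proof
    fix b assume "b \<in> ball ` {..<k}"
    then obtain i where "i < k" "b = ball i" by auto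
    then show "\<exists>c r. r > 0 \<and> b = cball_d d c r" using tm(1) unfolding ball_def by blast
  qed
  have cov: "\<forall>x\<in>cc ` {..<k}. \<exists>r>0. cball_d d x r \<in> ball ` {..<k}"
    using tm(1) by (auto simp: ball_def)
  obtain F where F: "F \<subseteq> ball ` {..<k}" "cc ` {..<k} \<subseteq> \<Union>F"
    "finite {b\<in>F. (0,0,0) \<in> b}" "card {b\<in>F. (0,0,0) \<in> b} \<le> N"
    using NB[rule_format, of "cc ` {..<k}" "ball ` {..<k}"] bnd balls cov by blast
  have sub: "ball ` {..<k} \<subseteq> {b\<in>F. (0,0,0) \<in> b}"
  proof
    fix b assume "b \<in> ball ` {..<k}"
    then obtain i where i: "i < k" "b = ball i" by auto
    obtain b' where b': "b' \<in> F" "cc i \<in> b'" using F(2) i by auto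
    then obtain j where j: "j < k" "b' = ball j" using F(1) by auto
    have "j = i" using sep[of i j] i j b' by auto
    then show "b \<in> {b\<in>F. (0,0,0) \<in> b}" using b' j i zin by auto
  qed
  have injb: "inj_on ball {..<k}"
    by (rule inj_onI) (metis self sep lessThan_iff)
  have "k = card (ball ` {..<k})" using card_image[OF injb] by simp
  also have "\<dots> \<le> card {b\<in>F. (0,0,0) \<in> b}" using card_mono[OF F(3) sub] .
  finally show False using F(4) k_def by simp
qed

end
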